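(* Consider a discrete-time time-invariant closed-loop system $\mathbf{x}_{t+1}=f(\mathbf{x}_t,\pi(\mathbf{x}_t))$ with states constrained to $\mathcal{X}\subseteq\mathbb{R}^{n_x}$, and a target set $\mathcal{X}_T$. Let $\mathcal{P}_t$ ($t\le 0$) be the true backprojection sets and let integers $t_2<t_1\le 0$ be given, together with sets $\bar{\mathcal{P}}_t$ for $t_2\le t\le t_1-1$ satisfying $\mathcal{P}_t\subseteq\bar{\mathcal{P}}_t$ (BP over-approximations). If $\bar{\mathcal{P}}_{t_2}\subseteq\mathcal{P}_{t_1}$, then the set $$\mathcal{I}=\mathcal{P}_{t_1}\cup\bigcup_{t=t_2}^{t_1-1}\bar{\mathcal{P}}_t$$ contains all BP sets for $t\le t_1$, i.e. $\mathcal{P}_t\subseteq\mathcal{I}$ for all $t\le t_1$.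
   Context: True backprojection sets: $\mathcal{P}_0=\mathcal{X}_T$ and, for $t<0$, $\mathcal{P}_t=\{\mathbf{x}\in\mathcal{X}\mid f(\mathbf{x},\pi(\mathbf{x}))\in\mathcal{P}_{t+1}\}$, i.e. the set of states from which the closed-loop system reaches $\mathcal{X}_T$ at time $0$. *)

theory Defs
  imports "HOL-Analysis.Analysis"
begin

text \<open>Backprojection sets indexed by the number of steps k = -t \<ge> 0:
  P_0 = XT, P_{t} = {x \<in> X. f x (pi x) \<in> P_{t+1}}.\<close>
fun bp_nat :: "('a set) \<Rightarrow> ('a set) \<Rightarrow> ('a \<Rightarrow> 'u \<Rightarrow> 'a) \<Rightarrow> ('a \<Rightarrow> 'u) \<Rightarrow> nat \<Rightarrow> 'a set" where
  "bp_nat X XT f pol 0 = XT"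
| "bp_nat X XT f pol (Suc k) = {x \<in> X. f x (pol x) \<in> bp_nat X XT f pol k}"

definition BP :: "('a set) \<Rightarrow> ('a set) \<Rightarrow> ('a \<Rightarrow> 'u \<Rightarrow> 'a) \<Rightarrow> ('a \<Rightarrow> 'u) \<Rightarrow> int \<Rightarrow> 'a set" where
  "BP X XT f pol t = bp_nat X XT f pol (nat (- t))"

end

theory Submission
  imports Defs
begin

lemma bp_mono_shift:
  assumes "bp_nat X XT f pol j \<subseteq> bp_nat X XT f pol i"
  shows "bp_nat X XT f pol (j + m) \<subseteq> bp_nat X XT f pol (i + m)"
  by (induction m) (use assms in auto)

theorem mainTheorem2:
  fixes X XT :: "(real ^ 'n) set"
    and f :: "real ^ 'n \<Rightarrow> real ^ 'm \<Rightarrow> real ^ 'n"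
    and pol :: "real ^ 'n \<Rightarrow> real ^ 'm"
    and Pbar :: "int \<Rightarrow> (real ^ 'n) set"
    and t1 t2 :: int
  assumes "t2 < t1" and "t1 \<le> 0"
    and "\<And>t. t2 \<le> t \<Longrightarrow> t \<le> t1 - 1 \<Longrightarrow> BP X XT f pol t \<subseteq> Pbar t"
    and "Pbar t2 \<subseteq> BP X XT f pol t1"
  shows "\<forall>t \<le> t1. BP X XT f pol t \<subseteq> BP X XT f pol t1 \<union> (\<Union>t' \<in> {t2..t1 - 1}. Pbar t')"
proof -
  define a where "a = nat (- t1)"
  define b where "b = nat (- t2)"
  let ?B = "bp_nat X XT f pol"
  define S where "S = BP X XT f pol t1 \<union> (\<Union>t' \<in> {t2..t1 - 1}. Pbar t')"
  have ab: "a < b" using assms(1,2) unfolding a_def b_def by auto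
  have Ba: "?B a = BP X XT f pol t1" unfolding BP_def a_def by simp
  have mid: "?B k \<subseteq> S" if "a < k" "k \<le> b" for k
  proof -
    have "-int k \<ge> t2" "-int k \<le> t1 - 1" using that assms(1,2) unfolding a_def b_def by auto
    hence "BP X XT f pol (- int k) \<subseteq> Pbar (- int k)" using assms(3) by blast
    moreover have "BP X XT f pol (- int k) = ?B k" unfolding BP_def by simp
    ultimately have 1: "?B k \<subseteq> Pbar (- int k)" by simp
    have "- int k \<in> {t2..t1 - 1}" using \<open>-int k \<ge> t2\<close> \<open>-int k \<le> t1 - 1\<close> by simp
    hence "Pbar (- int k) \<subseteq> (\<Union>t' \<in> {t2..t1 - 1}. Pbar t')" by (rule UN_upper)
    thus ?thesis using 1 unfolding S_def by (meson Un_upper2 order_trans)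
  qed
  have Bb: "?B b \<subseteq> ?B a"
  proof -
    have "BP X XT f pol t2 \<subseteq> Pbar t2" using assms(1,3) by auto
    moreover have "BP X XT f pol t2 = ?B b" unfolding BP_def b_def by simp
    ultimately show ?thesis using assms(4) Ba by auto
  qed
  have main: "a \<le> k \<Longrightarrow> ?B k \<subseteq> S" for k
  proof (induction k rule: less_induct)
    case (less k)
    show ?case
    proof (cases "k \<le> b")
      case True
      show ?thesis
      proof (cases "k = a")
        case True thus ?thesis using Ba unfolding S_def by auto
      next
        case False thus ?thesis using mid[of k] less.prems \<open>k \<le> b\<close> by simp
      qed
    next
      case False
      define m where "m = k - b"
      have m: "k = b + m" using False unfolding m_def by simp
      have "?B k \<subseteq> ?B (a + m)" using bp_mono_shift[OF Bb] m by blast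
      moreover have "?B (a + m) \<subseteq> S" using less.IH[of "a+m"] m ab by simp
      ultimately show ?thesis by blast
    qed
  qed
  show ?thesis unfolding S_def[symmetric]
  proof (intro allI impI)
    fix t assume "t \<le> t1"
    hence "a \<le> nat (- t)" unfolding a_def by auto
    thus "BP X XT f pol t \<subseteq> S" using main unfolding BP_def by blast
  qed
qed

end
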